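(* Let $S=(G,P,\Lambda,I)$ be a completely simple semigroup with non-singular sandwich matrix $P$. If the set $M=\{(x,y)\in S^2\mid x=(1,1_G,1)\text{ or }y=(1,1_G,1)\}$ is algebraic over $S$ in the language $\mathcal{L}_S$, then $S$ is an equational domain in the language $\mathcal{L}_S$.
   Context: Rees representation: a completely simple semigroup $S=(G,P,\Lambda,I)$ is given by a group $G$, index sets $\Lambda,I$ (each containing an element $1$), and a matrix $P=(p_{i\lambda})_{i\in I,\lambda\in\Lambda}$ over $G$ normalised so that $p_{1\lambda}=p_{i1}=1_G$; elements are triples $(\lambda,g,i)$ with product $(\lambda,g,i)(\mu,h,j)=(\lambda,gp_{i\mu}h,j)$ and inversion $(\lambda,g,i)^{-1}=(\lambda,p_{i\lambda}^{-1}g^{-1}p_{i\lambda}^{-1},i)$. $P$ is non-singular if it has no two equal rows and no two equal columns. The language $\mathcal{L}_S$ is $\{\cdot,{}^{-1}\}$ plus a constant for each element of $S$. An equation is an equality of two $\mathcal{L}_S$-terms; a system is a set of equations; a subset of $S^n$ is algebraic if it is the solution set of some system; $S$ is an equational domain (e.d.) if every finite union of algebraic sets is algebraic. *)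

theory Defs
  imports "HOL-Algebra.Group"
begin

text \<open>Elements are triples (lambda, g, i) with lambda in Lam, g in carrier G, i in I.
  The sandwich matrix is P :: 'i => 'l => 'a, entry P i lambda = p_{i lambda}.\<close>

definition rees_carrier :: "('a, 'b) monoid_scheme \<Rightarrow> 'l set \<Rightarrow> 'i set \<Rightarrow> ('l \<times> 'a \<times> 'i) set" where
  "rees_carrier G Lam I = Lam \<times> carrier G \<times> I"

definition rees_mult :: "('a, 'b) monoid_scheme \<Rightarrow> ('i \<Rightarrow> 'l \<Rightarrow> 'a)
    \<Rightarrow> ('l \<times> 'a \<times> 'i) \<Rightarrow> ('l \<times> 'a \<times> 'i) \<Rightarrow> ('l \<times> 'a \<times> 'i)" where
  "rees_mult G P x y =
     (case x of (lam, g, i) \<Rightarrow> case y of (mu, h, j) \<Rightarrow> (lam, g \<otimes>\<^bsub>G\<^esub> P i mu \<otimes>\<^bsub>G\<^esub> h, j))"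

definition rees_inv :: "('a, 'b) monoid_scheme \<Rightarrow> ('i \<Rightarrow> 'l \<Rightarrow> 'a)
    \<Rightarrow> ('l \<times> 'a \<times> 'i) \<Rightarrow> ('l \<times> 'a \<times> 'i)" where
  "rees_inv G P x =
     (case x of (lam, g, i) \<Rightarrow>
        (lam, inv\<^bsub>G\<^esub> (P i lam) \<otimes>\<^bsub>G\<^esub> inv\<^bsub>G\<^esub> g \<otimes>\<^bsub>G\<^esub> inv\<^bsub>G\<^esub> (P i lam), i))"

definition rees_data :: "('a, 'b) monoid_scheme \<Rightarrow> 'l set \<Rightarrow> 'i set \<Rightarrow> 'l \<Rightarrow> 'i
    \<Rightarrow> ('i \<Rightarrow> 'l \<Rightarrow> 'a) \<Rightarrow> bool" where
  "rees_data G Lam I lam1 i1 P \<longleftrightarrow>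
     group G \<and> lam1 \<in> Lam \<and> i1 \<in> I \<and>
     (\<forall>i\<in>I. \<forall>lam\<in>Lam. P i lam \<in> carrier G) \<and>
     (\<forall>lam\<in>Lam. P i1 lam = \<one>\<^bsub>G\<^esub>) \<and>
     (\<forall>i\<in>I. P i lam1 = \<one>\<^bsub>G\<^esub>)"

definition nonsingular :: "'l set \<Rightarrow> 'i set \<Rightarrow> ('i \<Rightarrow> 'l \<Rightarrow> 'a) \<Rightarrow> bool" where
  "nonsingular Lam I P \<longleftrightarrow>
     (\<forall>i\<in>I. \<forall>j\<in>I. i \<noteq> j \<longrightarrow> (\<exists>lam\<in>Lam. P i lam \<noteq> P j lam)) \<and>
     (\<forall>lam\<in>Lam. \<forall>mu\<in>Lam. lam \<noteq> mu \<longrightarrow> (\<exists>i\<in>I. P i lam \<noteq> P i mu))"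

datatype 'c trm = Var nat | Cst 'c | Mul "'c trm" "'c trm" | Inv "'c trm"

fun teval :: "('c \<Rightarrow> 'c \<Rightarrow> 'c) \<Rightarrow> ('c \<Rightarrow> 'c) \<Rightarrow> 'c list \<Rightarrow> 'c trm \<Rightarrow> 'c" where
  "teval m iv xs (Var k) = xs ! k"
| "teval m iv xs (Cst c) = c"
| "teval m iv xs (Mul t s) = m (teval m iv xs t) (teval m iv xs s)"
| "teval m iv xs (Inv t) = iv (teval m iv xs t)"

fun tvars :: "'c trm \<Rightarrow> nat set" where
  "tvars (Var k) = {k}"
| "tvars (Cst c) = {}"
| "tvars (Mul t s) = tvars t \<union> tvars s"
| "tvars (Inv t) = tvars t"

fun tconsts :: "'c trm \<Rightarrow> 'c set" where
  "tconsts (Var k) = {}"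
| "tconsts (Cst c) = {c}"
| "tconsts (Mul t s) = tconsts t \<union> tconsts s"
| "tconsts (Inv t) = tconsts t"

definition term_over :: "'c set \<Rightarrow> nat \<Rightarrow> 'c trm \<Rightarrow> bool" where
  "term_over S n t \<longleftrightarrow> tvars t \<subseteq> {..<n} \<and> tconsts t \<subseteq> S"

definition solset :: "'c set \<Rightarrow> ('c \<Rightarrow> 'c \<Rightarrow> 'c) \<Rightarrow> ('c \<Rightarrow> 'c) \<Rightarrow> nat
    \<Rightarrow> ('c trm \<times> 'c trm) set \<Rightarrow> 'c list set" where
  "solset S m iv n E = {xs. length xs = n \<and> set xs \<subseteq> S \<and>
      (\<forall>(t, s)\<in>E. teval m iv xs t = teval m iv xs s)}"

definition algebraic :: "'c set \<Rightarrow> ('c \<Rightarrow> 'c \<Rightarrow> 'c) \<Rightarrow> ('c \<Rightarrow> 'c) \<Rightarrow> nat \<Rightarrow> 'c list set \<Rightarrow> bool" where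
  "algebraic S m iv n A \<longleftrightarrow>
     (\<exists>E. (\<forall>(t, s)\<in>E. term_over S n t \<and> term_over S n s) \<and> A = solset S m iv n E)"

definition equational_domain :: "'c set \<Rightarrow> ('c \<Rightarrow> 'c \<Rightarrow> 'c) \<Rightarrow> ('c \<Rightarrow> 'c) \<Rightarrow> bool" where
  "equational_domain S m iv \<longleftrightarrow>
     (\<forall>n \<A>. finite \<A> \<and> \<A> \<noteq> {} \<and> (\<forall>A\<in>\<A>. algebraic S m iv n A) \<longrightarrow> algebraic S m iv n (\<Union>\<A>))"

end

theory Submission
  imports Defs
begin


fun subst :: "'c trm list \<Rightarrow> 'c trm \<Rightarrow> 'c trm" where
  "subst \<sigma> (Var k) = \<sigma> ! k"
| "subst \<sigma> (Cst c) = Cst c"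
| "subst \<sigma> (Mul t s) = Mul (subst \<sigma> t) (subst \<sigma> s)"
| "subst \<sigma> (Inv t) = Inv (subst \<sigma> t)"

lemma teval_subst:
  "tvars t \<subseteq> {..<length \<sigma>} \<Longrightarrow> teval m iv xs (subst \<sigma> t) = teval m iv (map (teval m iv xs) \<sigma>) t"
  by (induction t) auto

lemma term_over_subst:
  "term_over S (length \<sigma>) t \<Longrightarrow> \<forall>u\<in>set \<sigma>. term_over S n u \<Longrightarrow> term_over S n (subst \<sigma> t)"
  by (induction t) (auto simp: term_over_def)

lemma teval_closed:
  assumes "\<forall>x\<in>S. \<forall>y\<in>S. m x y \<in> S" "\<forall>x\<in>S. iv x \<in> S"
  shows "set xs \<subseteq> S \<Longrightarrow> term_over S (length xs) t \<Longrightarrow> teval m iv xs t \<in> S"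
  using assms by (induction t) (auto simp: term_over_def)

lemma union2:
  assumes clm: "\<forall>x\<in>S. \<forall>y\<in>S. m x y \<in> S" and cli: "\<forall>x\<in>S. iv x \<in> S"
    and eS: "e \<in> S"
    and M: "algebraic S m iv 2 {[x, y] | x y. x \<in> S \<and> y \<in> S \<and> (x = e \<or> y = e)}"
    and sepT: "\<forall>T\<in>Ts. term_over S 2 T"
    and sep: "\<forall>u\<in>S. \<forall>v\<in>S. (u = v \<longleftrightarrow> (\<forall>T\<in>Ts. teval m iv [u, v] T = e))"
    and A1: "algebraic S m iv n A1" and A2: "algebraic S m iv n A2"
  shows "algebraic S m iv n (A1 \<union> A2)"
proof -
  obtain EM where EMt: "\<forall>(t, s)\<in>EM. term_over S 2 t \<and> term_over S 2 s"
    and EM: "{[x, y] | x y. x \<in> S \<and> y \<in> S \<and> (x = e \<or> y = e)} = solset S m iv 2 EM"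
    using M unfolding algebraic_def by blast
  obtain E1 where E1t: "\<forall>(t, s)\<in>E1. term_over S n t \<and> term_over S n s" and E1: "A1 = solset S m iv n E1"
    using A1 unfolding algebraic_def by blast
  obtain E2 where E2t: "\<forall>(t, s)\<in>E2. term_over S n t \<and> term_over S n s" and E2: "A2 = solset S m iv n E2"
    using A2 unfolding algebraic_def by blast
  define E where "E = {(subst [subst [t,s] T, subst [t',s'] T'] a, subst [subst [t,s] T, subst [t',s'] T'] b)
     | a b t s t' s' T T'. (a,b)\<in>EM \<and> (t,s)\<in>E1 \<and> (t',s')\<in>E2 \<and> T\<in>Ts \<and> T'\<in>Ts}"
  have D_over: "term_over S n (subst [t,s] T)" if "term_over S n t" "term_over S n s" "T \<in> Ts" for t s T
  proof -
    have "term_over S (length [t,s]) T" using sepT that by (simp add: numeral_2_eq_2)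
    then show ?thesis using term_over_subst[of S "[t,s]" T n] that by auto
  qed
  have Et: "\<forall>(t, s)\<in>E. term_over S n t \<and> term_over S n s"
  proof (clarsimp simp: E_def)
    fix a b t s t' s' T T'
    assume h: "(a,b)\<in>EM" "(t,s)\<in>E1" "(t',s')\<in>E2" "T\<in>Ts" "T'\<in>Ts"
    have o: "term_over S n (subst [t,s] T)" "term_over S n (subst [t',s'] T')"
    proof -
      have "term_over S n t \<and> term_over S n s" using E1t h(2) by fastforce
      moreover have "term_over S n t' \<and> term_over S n s'" using E2t h(3) by fastforce
      ultimately show "term_over S n (subst [t,s] T)" "term_over S n (subst [t',s'] T')"
        using D_over h(4,5) by auto
    qed
    have "term_over S (length [subst [t,s] T, subst [t',s'] T']) a"
         "term_over S (length [subst [t,s] T, subst [t',s'] T']) b"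
      using EMt h(1) by (fastforce simp: numeral_2_eq_2)+
    then show "term_over S n (subst [subst [t,s] T, subst [t',s'] T'] a) \<and>
               term_over S n (subst [subst [t,s] T, subst [t',s'] T'] b)"
      using o by (auto intro!: term_over_subst)
  qed
  have tv2: "tvars a \<subseteq> {..<length [x,y::'a trm]}" if "term_over S 2 a" for a x y
    using that by (auto simp: term_over_def)
  have "A1 \<union> A2 = solset S m iv n E"
  proof (rule Set.set_eqI)
    fix xs
    show "xs \<in> A1 \<union> A2 \<longleftrightarrow> xs \<in> solset S m iv n E"
    proof (cases "length xs = n \<and> set xs \<subseteq> S")
      case False then show ?thesis by (auto simp: E1 E2 solset_def)
    next
      case True
      have ev: "teval m iv xs t \<in> S" if "term_over S n t" for t
        using teval_closed[OF clm cli] True that by auto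
      define d where "d t s T = teval m iv [teval m iv xs t, teval m iv xs s] T" for t s T
      have dS: "d t s T \<in> S" if "term_over S n t" "term_over S n s" "T \<in> Ts" for t s T
        unfolding d_def using teval_closed[OF clm cli, of "[teval m iv xs t, teval m iv xs s]" T]
          ev that sepT by (auto simp: numeral_2_eq_2)
      have dsub: "teval m iv xs (subst [t,s] T) = d t s T" if "T \<in> Ts" for t s T
        proof -
        have "tvars T \<subseteq> {..<length [t,s]}" using tv2 sepT that by blast
        then show ?thesis unfolding d_def by (simp add: teval_subst)
      qed
      have eq1: "(teval m iv xs t = teval m iv xs s) \<longleftrightarrow> (\<forall>T\<in>Ts. d t s T = e)"
        if "term_over S n t" "term_over S n s" for t s
        unfolding d_def using sep ev that by auto
      have key: "(\<forall>(a,b)\<in>EM. teval m iv [d1,d2] a = teval m iv [d1,d2] b) \<longleftrightarrow> (d1 = e \<or> d2 = e)"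
        if "d1 \<in> S" "d2 \<in> S" for d1 d2
      proof -
        have "[d1,d2] \<in> solset S m iv 2 EM \<longleftrightarrow> (d1 = e \<or> d2 = e)"
          using EM[symmetric] that by auto
        then show ?thesis using that by (auto simp: solset_def)
      qed
      have ev2: "teval m iv xs (subst [subst [t,s] T, subst [t',s'] T'] a) = teval m iv [d t s T, d t' s' T'] a"
        if "term_over S 2 a" "T\<in>Ts" "T'\<in>Ts" for t s t' s' T T' a
        using teval_subst[OF tv2[OF that(1)]] dsub that by simp
      have inE: "xs \<in> solset S m iv n E \<longleftrightarrow>
        (\<forall>t s t' s' T T'. (t,s)\<in>E1 \<longrightarrow> (t',s')\<in>E2 \<longrightarrow> T\<in>Ts \<longrightarrow> T'\<in>Ts \<longrightarrow>
            (d t s T = e \<or> d t' s' T' = e))" (is "_ \<longleftrightarrow> ?rhs")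
      proof -
        have "xs \<in> solset S m iv n E \<longleftrightarrow>
          (\<forall>t s t' s' T T'. (t,s)\<in>E1 \<longrightarrow> (t',s')\<in>E2 \<longrightarrow> T\<in>Ts \<longrightarrow> T'\<in>Ts \<longrightarrow>
            (\<forall>(a,b)\<in>EM. teval m iv [d t s T, d t' s' T'] a = teval m iv [d t s T, d t' s' T'] b))"
        proof
          assume sol: "xs \<in> solset S m iv n E"
          show "\<forall>t s t' s' T T'. (t,s)\<in>E1 \<longrightarrow> (t',s')\<in>E2 \<longrightarrow> T\<in>Ts \<longrightarrow> T'\<in>Ts \<longrightarrow>
            (\<forall>(a,b)\<in>EM. teval m iv [d t s T, d t' s' T'] a = teval m iv [d t s T, d t' s' T'] b)"
          proof (intro allI impI ballI, clarify)
            fix t s t' s' T T' a b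
            assume h: "(t,s)\<in>E1" "(t',s')\<in>E2" "T\<in>Ts" "T'\<in>Ts" "(a,b)\<in>EM"
            have "(subst [subst [t,s] T, subst [t',s'] T'] a, subst [subst [t,s] T, subst [t',s'] T'] b) \<in> E"
              unfolding E_def using h by blast
            then have "teval m iv xs (subst [subst [t,s] T, subst [t',s'] T'] a) = teval m iv xs (subst [subst [t,s] T, subst [t',s'] T'] b)"
              using sol unfolding solset_def by fastforce
            then show "teval m iv [d t s T, d t' s' T'] a = teval m iv [d t s T, d t' s' T'] b"
              using ev2 EMt h by fastforce
          qed
        next
          assume r: "\<forall>t s t' s' T T'. (t,s)\<in>E1 \<longrightarrow> (t',s')\<in>E2 \<longrightarrow> T\<in>Ts \<longrightarrow> T'\<in>Ts \<longrightarrow>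
            (\<forall>(a,b)\<in>EM. teval m iv [d t s T, d t' s' T'] a = teval m iv [d t s T, d t' s' T'] b)"
          have "\<forall>(u,v)\<in>E. teval m iv xs u = teval m iv xs v"
          proof (clarsimp simp: E_def)
            fix t s t' s' T T' a b
            assume h: "(a,b)\<in>EM" "(t,s)\<in>E1" "(t',s')\<in>E2" "T\<in>Ts" "T'\<in>Ts"
            have "teval m iv [d t s T, d t' s' T'] a = teval m iv [d t s T, d t' s' T'] b"
              using r h by fastforce
            then show "teval m iv xs (subst [subst [t,s] T, subst [t',s'] T'] a) = teval m iv xs (subst [subst [t,s] T, subst [t',s'] T'] b)"
              using ev2 EMt h by fastforce
          qed
          then show "xs \<in> solset S m iv n E" using True unfolding solset_def by blast
        qed
        also have "\<dots> \<longleftrightarrow> ?rhs"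
        proof -
          have "(\<forall>(a,b)\<in>EM. teval m iv [d t s T, d t' s' T'] a = teval m iv [d t s T, d t' s' T'] b)
               \<longleftrightarrow> (d t s T = e \<or> d t' s' T' = e)"
            if "(t,s)\<in>E1" "(t',s')\<in>E2" "T\<in>Ts" "T'\<in>Ts" for t s t' s' T T'
          proof -
            have "term_over S n t \<and> term_over S n s" using E1t that(1) by fastforce
            moreover have "term_over S n t' \<and> term_over S n s'" using E2t that(2) by fastforce
            ultimately show ?thesis using key dS that(3,4) by blast
          qed
          then show ?thesis by simp
        qed
        finally show ?thesis .
      qed
      have m1: "xs \<in> A1 \<longleftrightarrow> (\<forall>t s. (t,s)\<in>E1 \<longrightarrow> (\<forall>T\<in>Ts. d t s T = e))"
      proof -
        have "xs \<in> A1 \<longleftrightarrow> (\<forall>t s. (t,s)\<in>E1 \<longrightarrow> teval m iv xs t = teval m iv xs s)"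
          using True by (auto simp: E1 solset_def)
        moreover have "(teval m iv xs t = teval m iv xs s) \<longleftrightarrow> (\<forall>T\<in>Ts. d t s T = e)" if "(t,s)\<in>E1" for t s
          using eq1 E1t that by fastforce
        ultimately show ?thesis by simp
      qed
      have m2: "xs \<in> A2 \<longleftrightarrow> (\<forall>t s. (t,s)\<in>E2 \<longrightarrow> (\<forall>T\<in>Ts. d t s T = e))"
      proof -
        have "xs \<in> A2 \<longleftrightarrow> (\<forall>t s. (t,s)\<in>E2 \<longrightarrow> teval m iv xs t = teval m iv xs s)"
          using True by (auto simp: E2 solset_def)
        moreover have "(teval m iv xs t = teval m iv xs s) \<longleftrightarrow> (\<forall>T\<in>Ts. d t s T = e)" if "(t,s)\<in>E2" for t s
          using eq1 E2t that by fastforce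
        ultimately show ?thesis by simp
      qed
      show ?thesis
        unfolding inE Un_iff m1 m2 by blast
    qed
  qed
  then show ?thesis using Et unfolding algebraic_def by blast
qed


lemma ed_from_sep:
  assumes clm: "\<forall>x\<in>S. \<forall>y\<in>S. m x y \<in> S" and cli: "\<forall>x\<in>S. iv x \<in> S"
    and eS: "e \<in> S"
    and M: "algebraic S m iv 2 {[x, y] | x y. x \<in> S \<and> y \<in> S \<and> (x = e \<or> y = e)}"
    and sepT: "\<forall>T\<in>Ts. term_over S 2 T"
    and sep: "\<forall>u\<in>S. \<forall>v\<in>S. (u = v \<longleftrightarrow> (\<forall>T\<in>Ts. teval m iv [u, v] T = e))"
  shows "equational_domain S m iv"
  unfolding equational_domain_def
proof (intro allI impI, elim conjE)
  fix n and \<A> :: "'a list set set"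
  assume "finite \<A>" "\<A> \<noteq> {}" "\<forall>A\<in>\<A>. algebraic S m iv n A"
  then show "algebraic S m iv n (\<Union>\<A>)"
  proof (induction \<A> rule: finite_ne_induct)
    case (singleton x) then show ?case by simp
  next
    case (insert x F)
    then show ?case using union2[OF clm cli eS M sepT sep] by simp
  qed
qed

lemma (in group) mult_inv_one_iff:
  "a \<in> carrier G \<Longrightarrow> b \<in> carrier G \<Longrightarrow> (a \<otimes> inv b = \<one>) \<longleftrightarrow> a = b"
  using inv_solve_right'[of "\<one>" a b] by simp

lemma (in group) lcancel:
  "a \<in> carrier G \<Longrightarrow> b \<in> carrier G \<Longrightarrow> c \<in> carrier G \<Longrightarrow> (a \<otimes> b = a \<otimes> c) \<longleftrightarrow> b = c"
  by (metis inv_closed l_inv l_one m_assoc)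

context
  fixes G :: "('a, 'b) monoid_scheme" and Lam :: "'l set" and I :: "'i set"
    and lam1 :: 'l and i1 :: 'i and P :: "'i \<Rightarrow> 'l \<Rightarrow> 'a"
  assumes rd: "rees_data G Lam I lam1 i1 P"
begin

interpretation G: group G using rd by (simp add: rees_data_def)

lemma Pc: "i \<in> I \<Longrightarrow> l \<in> Lam \<Longrightarrow> P i l \<in> carrier G"
  using rd by (simp add: rees_data_def)
lemma P1: "l \<in> Lam \<Longrightarrow> P i1 l = \<one>\<^bsub>G\<^esub>" "i \<in> I \<Longrightarrow> P i lam1 = \<one>\<^bsub>G\<^esub>"
  using rd by (auto simp: rees_data_def)
lemma lam1I: "lam1 \<in> Lam" "i1 \<in> I" using rd by (auto simp: rees_data_def)

lemma mult_closed: "\<forall>x\<in>rees_carrier G Lam I. \<forall>y\<in>rees_carrier G Lam I. rees_mult G P x y \<in> rees_carrier G Lam I"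
  by (auto simp: rees_carrier_def rees_mult_def Pc)

lemma inv_closed: "\<forall>x\<in>rees_carrier G Lam I. rees_inv G P x \<in> rees_carrier G Lam I"
  by (auto simp: rees_carrier_def rees_inv_def Pc)

definition "ee = (lam1, \<one>\<^bsub>G\<^esub>, i1)"

definition TL :: "'l \<Rightarrow> ('l \<times> 'a \<times> 'i) trm" where
  "TL \<mu> = Mul (Mul (Cst ee) (Mul (Var 0) (Cst (\<mu>, \<one>\<^bsub>G\<^esub>, i1))))
              (Inv (Mul (Cst ee) (Mul (Var 1) (Cst (\<mu>, \<one>\<^bsub>G\<^esub>, i1)))))"

definition TI :: "'i \<Rightarrow> ('l \<times> 'a \<times> 'i) trm" where
  "TI j = Mul (Mul (Cst (lam1, \<one>\<^bsub>G\<^esub>, j)) (Mul (Var 0) (Cst ee)))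
              (Inv (Mul (Cst (lam1, \<one>\<^bsub>G\<^esub>, j)) (Mul (Var 1) (Cst ee))))"

lemma TL_eval:
  assumes "\<mu> \<in> Lam" "l \<in> Lam" "g \<in> carrier G" "i \<in> I" "l' \<in> Lam" "h \<in> carrier G" "i' \<in> I"
  shows "teval (rees_mult G P) (rees_inv G P) [(l,g,i), (l',h,i')] (TL \<mu>) = ee
     \<longleftrightarrow> g \<otimes>\<^bsub>G\<^esub> P i \<mu> = h \<otimes>\<^bsub>G\<^esub> P i' \<mu>"
  using assms lam1I
  by (simp add: TL_def ee_def rees_mult_def rees_inv_def P1 Pc G.mult_inv_one_iff del: G.inv_mult_group)

lemma TI_eval:
  assumes "j \<in> I" "l \<in> Lam" "g \<in> carrier G" "i \<in> I" "l' \<in> Lam" "h \<in> carrier G" "i' \<in> I"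
  shows "teval (rees_mult G P) (rees_inv G P) [(l,g,i), (l',h,i')] (TI j) = ee
     \<longleftrightarrow> P j l \<otimes>\<^bsub>G\<^esub> g = P j l' \<otimes>\<^bsub>G\<^esub> h"
  using assms lam1I
  by (simp add: TI_def ee_def rees_mult_def rees_inv_def P1 Pc G.mult_inv_one_iff del: G.inv_mult_group)

lemma ball_Un_image_aux: "(\<forall>T\<in>f ` A \<union> g ` B. Q T) \<longleftrightarrow> (\<forall>x\<in>A. Q (f x)) \<and> (\<forall>y\<in>B. Q (g y))"
  by blast

lemma sepT: "\<forall>T\<in>TL ` Lam \<union> TI ` I. term_over (rees_carrier G Lam I) 2 T"
  using lam1I by (auto simp: TL_def TI_def term_over_def ee_def rees_carrier_def)

lemma sep:
  assumes ns: "nonsingular Lam I P"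
  shows "\<forall>u\<in>rees_carrier G Lam I. \<forall>v\<in>rees_carrier G Lam I.
     (u = v \<longleftrightarrow> (\<forall>T\<in>TL ` Lam \<union> TI ` I. teval (rees_mult G P) (rees_inv G P) [u, v] T = ee))"
proof (intro ballI)
  fix u v assume u: "u \<in> rees_carrier G Lam I" and v: "v \<in> rees_carrier G Lam I"
  obtain l g i where ue: "u = (l,g,i)" and uc: "l \<in> Lam" "g \<in> carrier G" "i \<in> I"
    using u by (auto simp: rees_carrier_def)
  obtain l' h i' where ve: "v = (l',h,i')" and vc: "l' \<in> Lam" "h \<in> carrier G" "i' \<in> I"
    using v by (auto simp: rees_carrier_def)
  have iff: "(\<forall>T\<in>TL ` Lam \<union> TI ` I. teval (rees_mult G P) (rees_inv G P) [u, v] T = ee) \<longleftrightarrow>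
     (\<forall>\<mu>\<in>Lam. g \<otimes>\<^bsub>G\<^esub> P i \<mu> = h \<otimes>\<^bsub>G\<^esub> P i' \<mu>) \<and> (\<forall>j\<in>I. P j l \<otimes>\<^bsub>G\<^esub> g = P j l' \<otimes>\<^bsub>G\<^esub> h)"
    unfolding ue ve using uc vc
    apply (subst ball_Un_image_aux)
    by (simp add: TL_eval TI_eval cong: ball_cong)
  show "u = v \<longleftrightarrow> (\<forall>T\<in>TL ` Lam \<union> TI ` I. teval (rees_mult G P) (rees_inv G P) [u, v] T = ee)"
    unfolding iff
  proof
    assume "u = v" then show "(\<forall>\<mu>\<in>Lam. g \<otimes>\<^bsub>G\<^esub> P i \<mu> = h \<otimes>\<^bsub>G\<^esub> P i' \<mu>) \<and> (\<forall>j\<in>I. P j l \<otimes>\<^bsub>G\<^esub> g = P j l' \<otimes>\<^bsub>G\<^esub> h)"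
      using ue ve by simp
  next
    assume A: "(\<forall>\<mu>\<in>Lam. g \<otimes>\<^bsub>G\<^esub> P i \<mu> = h \<otimes>\<^bsub>G\<^esub> P i' \<mu>) \<and> (\<forall>j\<in>I. P j l \<otimes>\<^bsub>G\<^esub> g = P j l' \<otimes>\<^bsub>G\<^esub> h)"
    have gh: "g = h" using A lam1I P1(2)[OF uc(3)] P1(2)[OF vc(3)] uc vc by force
    have "P i \<mu> = P i' \<mu>" if "\<mu> \<in> Lam" for \<mu>
      using A that gh G.lcancel[of h "P i \<mu>" "P i' \<mu>"] Pc uc vc by auto
    then have ii: "i = i'" using ns uc vc unfolding nonsingular_def by blast
    have "P j l = P j l'" if "j \<in> I" for j
      using A that gh G.right_cancel[of h "P j l" "P j l'"] Pc uc vc by auto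
    then have ll: "l = l'" using ns uc vc unfolding nonsingular_def by blast
    show "u = v" using ue ve gh ii ll by simp
  qed
qed

end

theorem mainTheorem5:
  fixes G :: "('a, 'b) monoid_scheme" and Lam :: "'l set" and I :: "'i set"
    and lam1 :: 'l and i1 :: 'i and P :: "'i \<Rightarrow> 'l \<Rightarrow> 'a"
  assumes "rees_data G Lam I lam1 i1 P"
    and "nonsingular Lam I P"
    and "algebraic (rees_carrier G Lam I) (rees_mult G P) (rees_inv G P) 2
           {[x, y] | x y. x \<in> rees_carrier G Lam I \<and> y \<in> rees_carrier G Lam I \<and>
              (x = (lam1, \<one>\<^bsub>G\<^esub>, i1) \<or> y = (lam1, \<one>\<^bsub>G\<^esub>, i1))}"
  shows "equational_domain (rees_carrier G Lam I) (rees_mult G P) (rees_inv G P)"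
proof -
  have g: "group G" using assms(1) by (simp add: rees_data_def)
  have eS: "(lam1, \<one>\<^bsub>G\<^esub>, i1) \<in> rees_carrier G Lam I"
    using assms(1) group.is_monoid[OF g] by (auto simp: rees_data_def rees_carrier_def)
  show ?thesis
    using ed_from_sep[OF mult_closed[OF assms(1)] inv_closed[OF assms(1)] eS assms(3)
        sepT[OF assms(1)] sep[OF assms(1) assms(2), unfolded ee_def[OF assms(1)]]] .
qed

end
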